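(* Let $I$ and $J$ be functions on $\mathcal{R}^\infty$ which are invariant with respect to both characteristic vector fields $X_1$ and $X_2$, such that $X_3(I)=I'$ and $X_3(J)=1$. Then $\omega=d_VI-I'\,d_VJ$ is an $X_1$ and $X_2$ invariant contact form.
   Context: $\mathcal{R}^\infty$ is the infinite prolongation of the involutive system $u_{ij}=f_{ij}(x^1,x^2,x^3,u,u_i,u_j)$, $1\le i<j\le3$ ($f_{ij}$ smooth, $D_kf_{ij}=D_if_{kj}$ for distinct $i,j,k$); the characteristic vector fields are the commuting total derivatives $X_i=D_i$, $\sigma_i=dx^i$. Forms on $\mathcal{R}^\infty$ are bigraded with $d=d_H+d_V$, $d_Hg=\sum_iX_i(g)\sigma_i$ for functions. A function $f$ is $X$-invariant if $X(f)=0$; a $(0,s)$ contact form $\omega$ is $X$-invariant if $X(\omega)=X\lrcorner d_H\omega=0$ ($X(\omega)$ the projected Lie derivative), and $X$ and $Y$ invariant if invariant with respect to both. *)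

theory Defs
  imports "HOL-Analysis.Analysis"
begin

text \<open>For the involutive
system u_ij = f_ij (i<j), the infinite prolongation R^infinity has the standard
coordinates x^1,x^2,x^3, u, and the pure derivatives u_{i^k} (k >= 1).
Here  P i k  denotes the coordinate u_{i^(k+1)}, e.g. P i 0 = u_i.\<close>

datatype ix = I1 | I2 | I3

fun ixn :: "ix \<Rightarrow> nat" where
  "ixn I1 = 1" | "ixn I2 = 2" | "ixn I3 = 3"

definition ix_lt :: "ix \<Rightarrow> ix \<Rightarrow> bool" where
  "ix_lt i j \<longleftrightarrow> ixn i < ixn j"

datatype coord = Xc ix | U | P ix nat

type_synonym point = "coord \<Rightarrow> real"
type_synonym func = "point \<Rightarrow> real"

fun vertical :: "coord \<Rightarrow> bool" where
  "vertical (Xc _) = False" | "vertical U = True" | "vertical (P _ _) = True"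

definition depends_only :: "func \<Rightarrow> coord set \<Rightarrow> bool" where
  "depends_only F S \<longleftrightarrow> (\<forall>p q. (\<forall>c\<in>S. p c = q c) \<longrightarrow> F p = F q)"

definition finitely_dependent :: "func \<Rightarrow> bool" where
  "finitely_dependent F \<longleftrightarrow> (\<exists>S. finite S \<and> depends_only F S)"

definition pd :: "coord \<Rightarrow> func \<Rightarrow> func" where
  "pd c F p = deriv (\<lambda>t. F (p(c := t))) (p c)"

definition pds :: "coord list \<Rightarrow> func \<Rightarrow> func" where
  "pds cs F = foldr pd cs F"

text \<open>A function on R^infinity: depends on finitely many coordinates and is
C^infinity in them (all iterated partial derivatives exist and are continuous;
continuity w.r.t. the product topology, which for finitely dependent functions
is ordinary joint continuity).\<close>
definition smooth :: "func \<Rightarrow> bool" where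
  "smooth F \<longleftrightarrow> finitely_dependent F \<and>
     (\<forall>cs. continuous_on UNIV (pds cs F) \<and>
        (\<forall>c p. (\<lambda>t. pds cs F (p(c := t))) differentiable (at (p c))))"

definition vf :: "(coord \<Rightarrow> func) \<Rightarrow> func \<Rightarrow> func" where
  "vf V F p = (\<Sum>c | pd c F p \<noteq> 0. V c p * pd c F p)"

definition fS :: "(ix \<Rightarrow> ix \<Rightarrow> real \<Rightarrow> real \<Rightarrow> real \<Rightarrow> real \<Rightarrow> real \<Rightarrow> real \<Rightarrow> real)
                 \<Rightarrow> ix \<Rightarrow> ix \<Rightarrow> func" where
  "fS f i j p = (if ix_lt i j
      then f i j (p (Xc I1)) (p (Xc I2)) (p (Xc I3)) (p U) (p (P i 0)) (p (P j 0))
      else f j i (p (Xc I1)) (p (Xc I2)) (p (Xc I3)) (p U) (p (P j 0)) (p (P i 0)))"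

text \<open>X i is the total derivative D_i on R^infinity:
D_i x^j = delta_ij, D_i u = u_i, D_i u_{i^k} = u_{i^(k+1)},
D_i u_{j^k} = u_{i j^k} = D_j^(k-1) f_ij for j ~= i.\<close>
definition total_derivs ::
  "(ix \<Rightarrow> ix \<Rightarrow> real \<Rightarrow> real \<Rightarrow> real \<Rightarrow> real \<Rightarrow> real \<Rightarrow> real \<Rightarrow> real)
   \<Rightarrow> (ix \<Rightarrow> coord \<Rightarrow> func) \<Rightarrow> bool" where
  "total_derivs f X \<longleftrightarrow> (\<forall>i p.
     (\<forall>j. X i (Xc j) p = (if j = i then 1 else 0)) \<and>
     X i U p = p (P i 0) \<and>
     (\<forall>k. X i (P i k) p = p (P i (Suc k))) \<and>
     (\<forall>j k. j \<noteq> i \<longrightarrow> X i (P j k) p = ((vf (X j)) ^^ k) (fS f i j) p))"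

definition invariant_fun :: "(ix \<Rightarrow> coord \<Rightarrow> func) \<Rightarrow> ix \<Rightarrow> func \<Rightarrow> bool" where
  "invariant_fun X i F \<longleftrightarrow> (\<forall>p. vf (X i) F p = 0)"

text \<open>A (0,1)-form  sum_c a_c theta_c  (theta_c = d_V c the contact form of
the vertical coordinate c) is represented by its coefficient function a.\<close>
type_synonym form01 = "coord \<Rightarrow> func"

definition contact01 :: "form01 \<Rightarrow> bool" where
  "contact01 \<omega> \<longleftrightarrow> (\<forall>j. \<omega> (Xc j) = (\<lambda>p. 0)) \<and> finite {c. \<omega> c \<noteq> (\<lambda>p. 0)} \<and>
      (\<forall>c. smooth (\<omega> c))"

definition dV :: "func \<Rightarrow> form01" where
  "dV F c = (if vertical c then pd c F else (\<lambda>p. 0))"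

definition form_diff :: "form01 \<Rightarrow> form01 \<Rightarrow> form01" where
  "form_diff \<alpha> \<beta> c p = \<alpha> c p - \<beta> c p"

definition form_smult :: "func \<Rightarrow> form01 \<Rightarrow> form01" where
  "form_smult g \<alpha> c p = g p * \<alpha> c p"

text \<open>A (1,1)-form is written  sum_i sigma_i /\ eta_i  and represented by
i |-> eta_i.  d_H of a (0,1)-form: using d_H a = sum_i X_i(a) sigma_i and
d_H theta_c = - d_V d_H c = sum_i sigma_i /\ d_V(X_i(c)), we get
eta_i = sum_c (X_i(a_c) theta_c + a_c d_V(X_i(c))).\<close>
definition dH01 :: "(ix \<Rightarrow> coord \<Rightarrow> func) \<Rightarrow> form01 \<Rightarrow> (ix \<Rightarrow> form01)" where
  "dH01 X \<omega> i c' p = vf (X i) (\<omega> c') p +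
       (\<Sum>c | \<omega> c \<noteq> (\<lambda>q. 0). \<omega> c p * dV (X i c) c' p)"

text \<open>Interior product with X_j of a (1,1)-form sum_i sigma_i /\ eta_i:
since sigma_i(X_j) = delta_ij and contact forms annihilate X_j, it is eta_j.\<close>
definition interior11 :: "ix \<Rightarrow> (ix \<Rightarrow> form01) \<Rightarrow> form01" where
  "interior11 j \<beta> = \<beta> j"

text \<open>X_j(omega) = X_j interior d_H omega; omega is X_j-invariant iff this vanishes.\<close>
definition invariant_form :: "(ix \<Rightarrow> coord \<Rightarrow> func) \<Rightarrow> ix \<Rightarrow> form01 \<Rightarrow> bool" where
  "invariant_form X j \<omega> \<longleftrightarrow> (\<forall>c p. interior11 j (dH01 X \<omega>) c p = 0)"

end

theory Submission
  imports Defs "HOL-Analysis.Analysis"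
begin


lemma tri_aux: "\<bar>(u::real) - A\<bar> < \<bar>A - B\<bar> / 2 \<Longrightarrow> \<bar>v - B\<bar> < \<bar>A - B\<bar> / 2 \<Longrightarrow> u = v \<Longrightarrow> False"
  by (cases "A \<le> B"; cases "u \<le> A"; cases "u \<le> B"; simp add: abs_if split: if_splits)

lemma clairaut:
  fixes g gs gt gst gts :: "real \<Rightarrow> real \<Rightarrow> real"
  assumes ds: "\<And>s t. ((\<lambda>s. g s t) has_real_derivative gs s t) (at s)"
    and dt: "\<And>s t. ((\<lambda>t. g s t) has_real_derivative gt s t) (at t)"
    and dst: "\<And>s t. ((\<lambda>t. gs s t) has_real_derivative gst s t) (at t)"
    and dts: "\<And>s t. ((\<lambda>s. gt s t) has_real_derivative gts s t) (at s)"
    and c1: "continuous_on UNIV (\<lambda>z. gst (fst z) (snd z))"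
    and c2: "continuous_on UNIV (\<lambda>z. gts (fst z) (snd z))"
  shows "gst a b = gts a b"
proof (rule ccontr)
  assume ne: "gst a b \<noteq> gts a b"
  define e where "e = \<bar>gst a b - gts a b\<bar> / 2"
  have e: "e > 0" using ne by (simp add: e_def)
  have "continuous (at (a,b)) (\<lambda>z. gst (fst z) (snd z))"
    using c1 by (simp add: continuous_on_eq_continuous_at)
  then obtain d1 where d1: "d1 > 0" "\<And>z. dist z (a,b) < d1 \<Longrightarrow> dist (gst (fst z) (snd z)) (gst a b) < e"
    using e unfolding continuous_at_eps_delta by force
  have "continuous (at (a,b)) (\<lambda>z. gts (fst z) (snd z))"
    using c2 by (simp add: continuous_on_eq_continuous_at)
  then obtain d2 where d2: "d2 > 0" "\<And>z. dist z (a,b) < d2 \<Longrightarrow> dist (gts (fst z) (snd z)) (gts a b) < e"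
    using e unfolding continuous_at_eps_delta by force
  define h where "h = min d1 d2 / 2"
  have h: "h > 0" "h < d1" "h < d2" using d1 d2 by (auto simp: h_def)
  have close: "dist (x,y) (a,b) < min d1 d2" if "a < x" "x < a + h" "b < y" "y < b + h" for x y
  proof -
    have "dist (x,y) (a,b) \<le> dist x a + dist y b"
      using sqrt_sum_squares_le_sum_abs[of "dist x a" "dist y b"] by (simp add: dist_Pair_Pair
)
    also have "\<dots> < h + h" using that by (simp add: dist_real_def)
    finally show ?thesis by (simp add: h_def)
  qed
  define D where "D = g (a+h) (b+h) - g (a+h) b - g a (b+h) + g a b"
  obtain x1 where x1: "a < x1" "x1 < a + h"
    "(g (a+h) (b+h) - g (a+h) b) - (g a (b+h) - g a b) = ((a+h) - a) * (gs x1 (b+h) - gs x1 b)"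
    using MVT2[of a "a+h" "\<lambda>s. g s (b+h) - g s b" "\<lambda>s. gs s (b+h) - gs s b"] h
      DERIV_diff[OF ds ds] by auto
  obtain y1 where y1: "b < y1" "y1 < b + h"
    "gs x1 (b+h) - gs x1 b = ((b+h) - b) * gst x1 y1"
    using MVT2[of b "b+h" "\<lambda>t. gs x1 t" "\<lambda>t. gst x1 t"] h dst by auto
  obtain y2 where y2: "b < y2" "y2 < b + h"
    "(g (a+h) (b+h) - g a (b+h)) - (g (a+h) b - g a b) = ((b+h) - b) * (gt (a+h) y2 - gt a y2)"
    using MVT2[of b "b+h" "\<lambda>t. g (a+h) t - g a t" "\<lambda>t. gt (a+h) t - gt a t"] h
      DERIV_diff[OF dt dt] by auto
  obtain x2 where x2: "a < x2" "x2 < a + h"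
    "gt (a+h) y2 - gt a y2 = ((a+h) - a) * gts x2 y2"
    using MVT2[of a "a+h" "\<lambda>s. gt s y2" "\<lambda>s. gts s y2"] h dts by auto
  have "h * h * gst x1 y1 = h * h * gts x2 y2"
    using x1(3) y1(3) y2(3) x2(3) by (simp add: algebra_simps)
  then have eq: "gst x1 y1 = gts x2 y2" using h by simp
  have "dist (gst x1 y1) (gst a b) < e" using d1(2)[of "(x1,y1)"] close[of x1 y1] x1 y1 by simp
  moreover have "dist (gts x2 y2) (gts a b) < e" using d2(2)[of "(x2,y2)"] close[of x2 y2] x2 y2 by simp
  ultimately show False using eq unfolding e_def dist_real_def by (metis tri_aux abs_minus_commute)
qed



definition cdiff :: "func \<Rightarrow> bool" where
  "cdiff F \<longleftrightarrow> (\<forall>c p. (\<lambda>t. F (p(c := t))) differentiable (at (p c)))"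

lemma cdiff_at:
  assumes "cdiff F"
  shows "((\<lambda>s. F (p(c:=s))) has_real_derivative pd c F (p(c:=t))) (at t)"
proof -
  have "(\<lambda>s. F ((p(c:=t))(c:=s))) differentiable (at ((p(c:=t)) c))"
    using assms unfolding cdiff_def by blast
  then have "(\<lambda>s. F (p(c:=s))) differentiable at t" by simp
  then have "DERIV (\<lambda>s. F (p(c:=s))) t :> deriv (\<lambda>s. F (p(c:=s))) t"
    using DERIV_deriv_iff_real_differentiable by blast
  moreover have "pd c F (p(c:=t)) = deriv (\<lambda>s. F (p(c:=s))) t" by (simp add: pd_def)
  ultimately show ?thesis by simp
qed

lemma cdiff_at0:
  assumes "cdiff F"
  shows "((\<lambda>s. F (p(c:=s))) has_real_derivative pd c F p) (at (p c))"
  using cdiff_at[OF assms, of p c "p c"] by simp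

lemma cdiffI:
  assumes "\<And>c p. \<exists>D. ((\<lambda>s. F (p(c:=s))) has_real_derivative D) (at (p c))"
  shows "cdiff F"
  unfolding cdiff_def using assms real_differentiable_def by blast

lemma pd_eqI:
  assumes "((\<lambda>s. F (p(c:=s))) has_real_derivative D) (at (p c))"
  shows "pd c F p = D"
  unfolding pd_def using DERIV_imp_deriv[OF assms] .

lemma pds_Nil [simp]: "pds [] F = F" by (simp add: pds_def)
lemma pds_Cons [simp]: "pds (c#cs) F = pd c (pds cs F)" by (simp add: pds_def)
lemma pds_snoc: "pds (cs@[c]) F = pds cs (pd c F)" by (simp add: pds_def)

lemma pd_zero:
  assumes "depends_only F S" "c \<notin> S"
  shows "pd c F p = 0"
proof -
  have "(\<lambda>t. F (p(c:=t))) = (\<lambda>t. F p)"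
    using assms unfolding depends_only_def by (intro ext) (metis fun_upd_other)
  then show ?thesis unfolding pd_def by simp
qed

lemma dep_pd:
  assumes "depends_only F S"
  shows "depends_only (pd c F) S"
proof (cases "c \<in> S")
  case True
  show ?thesis unfolding depends_only_def
  proof (intro allI impI)
    fix p q :: point assume pq: "\<forall>x\<in>S. p x = q x"
    have "(\<lambda>t. F (p(c:=t))) = (\<lambda>t. F (q(c:=t)))"
      using assms pq unfolding depends_only_def by (intro ext) simp
    moreover have "p c = q c" using pq True by auto
    ultimately show "pd c F p = pd c F q" unfolding pd_def by simp
  qed
next
  case False
  then show ?thesis using pd_zero[OF assms] unfolding depends_only_def by simp
qed

lemma dep_mono: "depends_only F S \<Longrightarrow> S \<subseteq> T \<Longrightarrow> depends_only F T"
  unfolding depends_only_def by blast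

lemma fd_pd: "finitely_dependent F \<Longrightarrow> finitely_dependent (pd c F)"
  unfolding finitely_dependent_def using dep_pd by blast

lemma smooth_D:
  assumes "smooth F"
  shows "finitely_dependent F" "continuous_on UNIV F" "cdiff F" "\<And>c. smooth (pd c F)"
proof -
  show "finitely_dependent F" using assms smooth_def by blast
  show "continuous_on UNIV F" using assms unfolding smooth_def by (metis pds_Nil)
  show "cdiff F" using assms unfolding smooth_def cdiff_def by (metis pds_Nil)
  fix c
  show "smooth (pd c F)" using assms fd_pd unfolding smooth_def by (metis pds_snoc)
qed

lemma smooth_coind:
  assumes M: "\<And>H. H \<in> M \<Longrightarrow> finitely_dependent H \<and> continuous_on UNIV H \<and> cdiff H \<and> (\<forall>c. pd c H \<in> M)"
    and F: "F \<in> M"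
  shows "smooth F"
proof -
  have "\<forall>G\<in>M. pds cs G \<in> M" for cs
    by (induction cs) (auto dest: M)
  then show ?thesis using F M unfolding smooth_def cdiff_def by blast
qed

lemma smooth_const: "smooth (\<lambda>p. a::real)"
proof (rule smooth_coind[where M="range (\<lambda>a::real. \<lambda>p::point. a)"])
  fix H :: func assume "H \<in> range (\<lambda>a. \<lambda>p. a)"
  then obtain b where H: "H = (\<lambda>p. b)" by auto
  have "pd c H = (\<lambda>p. 0)" for c unfolding H pd_def by simp
  moreover have "finitely_dependent H" unfolding H finitely_dependent_def depends_only_def by blast
  moreover have "cdiff H" unfolding H cdiff_def by simp
  ultimately show "finitely_dependent H \<and> continuous_on UNIV H \<and> cdiff H \<and> (\<forall>c. pd c H \<in> range (\<lambda>a. \<lambda>p. a))"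
    unfolding H by auto
qed auto

lemma smooth_proj: "smooth (\<lambda>p::point. p c)"
proof (rule smooth_coind[where M="insert (\<lambda>p::point. p c) (range (\<lambda>a::real. \<lambda>p::point. a))"])
  fix H :: func assume "H \<in> insert (\<lambda>p. p c) (range (\<lambda>a. \<lambda>p. a))"
  then consider "H = (\<lambda>p. p c)" | b where "H = (\<lambda>p. b)" by auto
  then show "finitely_dependent H \<and> continuous_on UNIV H \<and> cdiff H \<and> (\<forall>d. pd d H \<in> insert (\<lambda>p. p c) (range (\<lambda>a. \<lambda>p. a)))"
  proof cases
    case 1
    have pdH: "pd d H = (\<lambda>p. if d = c then 1 else 0)" for d
    proof (intro ext)
      fix p show "pd d H p = (if d = c then 1 else 0)"
        by (rule pd_eqI) (auto simp: 1 intro!: derivative_eq_intros)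
    qed
    have "finitely_dependent H" unfolding 1 finitely_dependent_def depends_only_def
      by (intro exI[of _ "{c}"]) simp
    moreover have "cdiff H"
    proof (rule cdiffI)
      fix d p
      show "\<exists>D. ((\<lambda>s. H (p(d:=s))) has_real_derivative D) (at (p d))"
        by (cases "c = d") (auto simp: 1 intro: DERIV_ident DERIV_const)
    qed
    ultimately show ?thesis unfolding pdH by (auto simp: 1)
  next
    case 2
    have "pd c H = (\<lambda>p. 0)" for c unfolding 2 pd_def by simp
    moreover have "finitely_dependent H" unfolding 2 finitely_dependent_def depends_only_def by blast
    moreover have "cdiff H" unfolding 2 cdiff_def by simp
    ultimately show ?thesis unfolding 2 by auto
  qed
qed auto


lemma sum_split_add: "(\<Sum>i<n+m. f i) = (\<Sum>i<n. f i) + (\<Sum>i<m. f (n+i))" for f :: "nat \<Rightarrow> real"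
  by (induction m) (simp_all add: add.assoc)

lemma smooth_sp:
  fixes n :: nat and A B :: "nat \<Rightarrow> func"
  assumes "\<forall>i<n. smooth (A i) \<and> smooth (B i)"
  shows "smooth (\<lambda>p. \<Sum>i<n. A i p * B i p)"
proof (rule smooth_coind[where M="{H. \<exists>(n::nat) (A::nat\<Rightarrow>func) (B::nat\<Rightarrow>func). (\<forall>i<n. smooth (A i) \<and> smooth (B i)) \<and> H = (\<lambda>p. \<Sum>i<n. A i p * B i p)}"])
  fix H :: func assume "H \<in> {H. \<exists>(n::nat) (A::nat\<Rightarrow>func) (B::nat\<Rightarrow>func). (\<forall>i<n. smooth (A i) \<and> smooth (B i)) \<and> H = (\<lambda>p. \<Sum>i<n. A i p * B i p)}"
  then obtain n :: nat and A B :: "nat \<Rightarrow> func" where sm: "\<forall>i<n. smooth (A i) \<and> smooth (B i)" and H: "H = (\<lambda>p. \<Sum>i<n. A i p * B i p)"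
    by blast
  have "\<forall>i<n. \<exists>S. finite S \<and> depends_only (A i) S"
    using sm smooth_D(1) finitely_dependent_def by blast
  then obtain SA where SA: "\<forall>i<n. finite (SA i) \<and> depends_only (A i) (SA i)" by metis
  have "\<forall>i<n. \<exists>S. finite S \<and> depends_only (B i) S"
    using sm smooth_D(1) finitely_dependent_def by blast
  then obtain SB where SB: "\<forall>i<n. finite (SB i) \<and> depends_only (B i) (SB i)" by metis
  define T where "T = (\<Union>i<n. SA i \<union> SB i)"
  have "finite T" using SA SB by (auto simp: T_def)
  moreover have "depends_only H T"
    unfolding depends_only_def H
  proof (intro allI impI)
    fix p q :: point assume pq: "\<forall>c\<in>T. p c = q c"
    have "A i p = A i q \<and> B i p = B i q" if "i < n" for i
      using SA SB that pq unfolding depends_only_def T_def by (meson UN_I Un_iff lessThan_iff)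
    then show "(\<Sum>i<n. A i p * B i p) = (\<Sum>i<n. A i q * B i q)" by (intro sum.cong) auto
  qed
  ultimately have fd: "finitely_dependent H" unfolding finitely_dependent_def by blast
  have cont: "continuous_on UNIV H" unfolding H
    using sm smooth_D(2) by (intro continuous_on_sum continuous_on_mult) auto
  have der: "((\<lambda>s. H (p(c:=s))) has_real_derivative
      (\<Sum>i<n. pd c (A i) p * B i p + pd c (B i) p * A i p)) (at (p c))" for c p
    unfolding H
  proof (rule DERIV_sum)
    fix i assume "i \<in> {..<n}"
    then have "cdiff (A i)" "cdiff (B i)" using sm smooth_D(3) by auto
    from DERIV_mult[OF cdiff_at0[OF this(1), of p c] cdiff_at0[OF this(2), of p c]]
    show "((\<lambda>s. A i (p(c:=s)) * B i (p(c:=s))) has_real_derivative pd c (A i) p * B i p + pd c (B i) p * A i p) (at (p c))"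
      by simp
  qed
  have cd: "cdiff H" using der by (intro cdiffI) blast
  have "pd c H \<in> {H. \<exists>(n::nat) (A::nat\<Rightarrow>func) (B::nat\<Rightarrow>func). (\<forall>i<n. smooth (A i) \<and> smooth (B i)) \<and> H = (\<lambda>p. \<Sum>i<n. A i p * B i p)}" for c
  proof -
    define A' where "A' i = (if i < n then pd c (A i) else pd c (B (i-n)))" for i
    define B' where "B' i = (if i < n then B i else A (i-n))" for i
    have "\<forall>i<n+n. smooth (A' i) \<and> smooth (B' i)"
      using sm smooth_D(4) by (auto simp: A'_def B'_def)
    moreover have "pd c H = (\<lambda>p. \<Sum>i<n+n. A' i p * B' i p)"
    proof
      fix p
      have "pd c H p = (\<Sum>i<n. pd c (A i) p * B i p + pd c (B i) p * A i p)"
        using pd_eqI[OF der] .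
      also have "\<dots> = (\<Sum>i<n. A' i p * B' i p) + (\<Sum>i<n. A' (n+i) p * B' (n+i) p)"
        by (simp add: sum.distrib A'_def B'_def)
      also have "\<dots> = (\<Sum>i<n+n. A' i p * B' i p)" by (simp add: sum_split_add)
      finally show "pd c H p = (\<Sum>i<n+n. A' i p * B' i p)" .
    qed
    ultimately show ?thesis by blast
  qed
  then show "finitely_dependent H \<and> continuous_on UNIV H \<and> cdiff H \<and>
     (\<forall>c. pd c H \<in> {H. \<exists>(n::nat) (A::nat\<Rightarrow>func) (B::nat\<Rightarrow>func). (\<forall>i<n. smooth (A i) \<and> smooth (B i)) \<and> H = (\<lambda>p. \<Sum>i<n. A i p * B i p)})"
    using fd cont cd by blast
next
  show "(\<lambda>p. \<Sum>i<n. A i p * B i p) \<in> {H. \<exists>(n::nat) (A::nat\<Rightarrow>func) (B::nat\<Rightarrow>func). (\<forall>i<n. smooth (A i) \<and> smooth (B i)) \<and> H = (\<lambda>p. \<Sum>i<n. A i p * B i p)}"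
    using assms by blast
qed

lemma smooth_mult: "smooth F \<Longrightarrow> smooth G \<Longrightarrow> smooth (\<lambda>p. F p * G p)"
  using smooth_sp[of 1 "\<lambda>_. F" "\<lambda>_. G"] by simp

lemma smooth_add: "smooth F \<Longrightarrow> smooth G \<Longrightarrow> smooth (\<lambda>p. F p + G p)"
  using smooth_sp[of 2 "\<lambda>i. if i = 0 then F else G" "\<lambda>_ _. 1"] smooth_const
  by (auto simp: numeral_2_eq_2 lessThan_Suc add.commute less_Suc_eq)

lemma smooth_diff: "smooth F \<Longrightarrow> smooth G \<Longrightarrow> smooth (\<lambda>p. F p - G p)"
  using smooth_add[of F "\<lambda>p. G p * (-1)"] smooth_mult[of G "\<lambda>_. -1"] smooth_const by simp

lemma smooth_sum: "finite S \<Longrightarrow> (\<And>c. c \<in> S \<Longrightarrow> smooth (F c)) \<Longrightarrow> smooth (\<lambda>p. \<Sum>c\<in>S. F c p)"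
proof (induction S rule: finite_induct)
  case empty then show ?case using smooth_const by simp
next
  case (insert x S) then show ?case using smooth_add[of "F x" "\<lambda>p. \<Sum>c\<in>S. F c p"] by simp
qed



lemma cont_upd2: "continuous_on UNIV (\<lambda>z::real\<times>real. p(c:=fst z, d:=snd z))"
proof (rule continuous_on_coordinatewise_then_product)
  fix i
  show "continuous_on UNIV (\<lambda>z::real\<times>real. (p(c:=fst z, d:=snd z)) i)"
    by (cases "i = d"; cases "i = c") (auto intro!: continuous_intros)
qed

lemma cont_comp2: "continuous_on UNIV F \<Longrightarrow> continuous_on UNIV (\<lambda>z::real\<times>real. F (p(c:=fst z, d:=snd z)))"
  using continuous_on_compose2[OF _ cont_upd2, of UNIV F] by auto

lemma schwarz:
  assumes sm: "smooth F"
  shows "pd c (pd d F) p = pd d (pd c F) p"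
proof (cases "c = d")
  case True then show ?thesis by simp
next
  case False
  have tw: "p(c:=s, d:=t) = p(d:=t, c:=s)" for s t using False by (simp add: fun_upd_twist)
  have s1: "smooth (pd c F)" "smooth (pd d F)" using sm smooth_D(4) by auto
  have cF: "cdiff F" "cdiff (pd c F)" "cdiff (pd d F)" using sm s1 smooth_D(3) by auto
  have "pd d (pd c F) (p(c:=p c, d:=p d)) = pd c (pd d F) (p(c:=p c, d:=p d))"
  proof (rule clairaut[where g="\<lambda>s t. F (p(c:=s, d:=t))" and gs="\<lambda>s t. pd c F (p(c:=s, d:=t))"
        and gt="\<lambda>s t. pd d F (p(c:=s, d:=t))" and gst="\<lambda>s t. pd d (pd c F) (p(c:=s, d:=t))"
        and gts="\<lambda>s t. pd c (pd d F) (p(c:=s, d:=t))" and a="p c" and b="p d"])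
    fix s t
    show "((\<lambda>s. F (p(c:=s, d:=t))) has_real_derivative pd c F (p(c:=s, d:=t))) (at s)"
      using cdiff_at[OF cF(1), of "p(d:=t)" c s] by (simp add: tw)
    show "((\<lambda>t. F (p(c:=s, d:=t))) has_real_derivative pd d F (p(c:=s, d:=t))) (at t)"
      using cdiff_at[OF cF(1), of "p(c:=s)" d t] by simp
    show "((\<lambda>t. pd c F (p(c:=s, d:=t))) has_real_derivative pd d (pd c F) (p(c:=s, d:=t))) (at t)"
      using cdiff_at[OF cF(2), of "p(c:=s)" d t] by simp
    show "((\<lambda>s. pd d F (p(c:=s, d:=t))) has_real_derivative pd c (pd d F) (p(c:=s, d:=t))) (at s)"
      using cdiff_at[OF cF(3), of "p(d:=t)" c s] by (simp add: tw)
  next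
    show "continuous_on UNIV (\<lambda>z. pd d (pd c F) (p(c:=fst z, d:=snd z)))"
      using cont_comp2[OF smooth_D(2)[OF smooth_D(4)[OF s1(1)]]] by simp
    show "continuous_on UNIV (\<lambda>z. pd c (pd d F) (p(c:=fst z, d:=snd z)))"
      using cont_comp2[OF smooth_D(2)[OF smooth_D(4)[OF s1(2)]]] by simp
  qed
  then show ?thesis by simp
qed



lemma vf_sum:
  assumes "finite S" "depends_only G S"
  shows "vf V G p = (\<Sum>c\<in>S. V c p * pd c G p)"
proof -
  have sub: "{c. pd c G p \<noteq> 0} \<subseteq> S" using pd_zero[OF assms(2)] by blast
  show ?thesis unfolding vf_def
    by (rule sum.mono_neutral_left[OF assms(1) sub]) auto
qed

lemma depends_only_finite: "finitely_dependent G \<Longrightarrow> \<exists>S. finite S \<and> depends_only G S"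
  by (simp add: finitely_dependent_def)

lemma pd_mult:
  assumes "cdiff F" "cdiff G"
  shows "pd c (\<lambda>p. F p * G p) p = pd c F p * G p + F p * pd c G p"
proof -
  from DERIV_mult[OF cdiff_at0[OF assms(1), of p c] cdiff_at0[OF assms(2), of p c]]
  have "((\<lambda>s. F (p(c:=s)) * G (p(c:=s))) has_real_derivative pd c F p * G p + pd c G p * F p) (at (p c))"
    by simp
  from pd_eqI[OF this] show ?thesis by simp
qed

lemma pd_diff:
  assumes "cdiff F" "cdiff G"
  shows "pd c (\<lambda>p. F p - G p) p = pd c F p - pd c G p"
proof -
  from DERIV_diff[OF cdiff_at0[OF assms(1), of p c] cdiff_at0[OF assms(2), of p c]]
  have "((\<lambda>s. F (p(c:=s)) - G (p(c:=s))) has_real_derivative pd c F p - pd c G p) (at (p c))"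
    by simp
  from pd_eqI[OF this] show ?thesis by simp
qed

lemma dep_mult: "depends_only F S \<Longrightarrow> depends_only G S \<Longrightarrow> depends_only (\<lambda>p. F p * G p) S"
  unfolding depends_only_def by metis
lemma dep_diff: "depends_only F S \<Longrightarrow> depends_only G S \<Longrightarrow> depends_only (\<lambda>p. F p - G p) S"
  unfolding depends_only_def by metis

lemma vf_mult:
  assumes "smooth F" "smooth G"
  shows "vf V (\<lambda>p. F p * G p) p = vf V F p * G p + F p * vf V G p"
proof -
  obtain S1 where S1: "finite S1" "depends_only F S1" using smooth_D(1)[OF assms(1)] depends_only_finite by blast
  obtain S2 where S2: "finite S2" "depends_only G S2" using smooth_D(1)[OF assms(2)] depends_only_finite by blast
  let ?S = "S1 \<union> S2"
  have d1: "depends_only F ?S" "depends_only G ?S" using S1 S2 dep_mono by blast+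
  have "vf V (\<lambda>p. F p * G p) p = (\<Sum>c\<in>?S. V c p * pd c (\<lambda>p. F p * G p) p)"
    using vf_sum S1 S2 dep_mult[OF d1] by blast
  also have "\<dots> = (\<Sum>c\<in>?S. V c p * pd c F p) * G p + F p * (\<Sum>c\<in>?S. V c p * pd c G p)"
    using pd_mult[OF smooth_D(3)[OF assms(1)] smooth_D(3)[OF assms(2)]]
    by (simp add: sum_distrib_left sum_distrib_right sum.distrib algebra_simps)
  also have "\<dots> = vf V F p * G p + F p * vf V G p"
    using vf_sum[OF _ d1(1)] vf_sum[OF _ d1(2)] S1 S2 by simp
  finally show ?thesis .
qed

lemma vf_diff:
  assumes "smooth F" "smooth G"
  shows "vf V (\<lambda>p. F p - G p) p = vf V F p - vf V G p"
proof -
  obtain S1 where S1: "finite S1" "depends_only F S1" using smooth_D(1)[OF assms(1)] depends_only_finite by blast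
  obtain S2 where S2: "finite S2" "depends_only G S2" using smooth_D(1)[OF assms(2)] depends_only_finite by blast
  let ?S = "S1 \<union> S2"
  have d1: "depends_only F ?S" "depends_only G ?S" using S1 S2 dep_mono by blast+
  have "vf V (\<lambda>p. F p - G p) p = (\<Sum>c\<in>?S. V c p * pd c (\<lambda>p. F p - G p) p)"
    using vf_sum S1 S2 dep_diff[OF d1] by blast
  also have "\<dots> = (\<Sum>c\<in>?S. V c p * pd c F p) - (\<Sum>c\<in>?S. V c p * pd c G p)"
    by (simp add: pd_diff[OF smooth_D(3)[OF assms(1)] smooth_D(3)[OF assms(2)]] sum_subtractf right_diff_distrib)
  also have "\<dots> = vf V F p - vf V G p"
    using vf_sum[OF _ d1(1)] vf_sum[OF _ d1(2)] S1 S2 by simp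
  finally show ?thesis .
qed

lemma vf_zero: "vf V (\<lambda>p. 0) p = 0"
  using vf_sum[of "{}" "\<lambda>p. 0" V p] by (simp add: depends_only_def)

lemma vf_const: "vf V (\<lambda>p. a) p = 0"
  using vf_sum[of "{}" "\<lambda>p. a" V p] by (simp add: depends_only_def)

lemma pd_proj: "pd d (\<lambda>p. p c) p = (if d = c then 1 else 0)"
  by (rule pd_eqI) (auto intro: DERIV_ident DERIV_const)

lemma vf_proj: "vf V (\<lambda>p. p c) p = V c p"
proof -
  have "depends_only (\<lambda>p. p c) {c}" by (simp add: depends_only_def)
  from vf_sum[OF _ this] show ?thesis by (simp add: pd_proj)
qed

lemma vf_eq_fun:
  assumes "finite S" "depends_only G S"
  shows "vf V G = (\<lambda>p. \<Sum>c\<in>S. V c p * pd c G p)"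
  using vf_sum[OF assms] by blast

lemma smooth_vf:
  assumes "finite S" "depends_only G S" "smooth G" "\<And>c. c \<in> S \<Longrightarrow> smooth (V c)"
  shows "smooth (vf V G)"
  unfolding vf_eq_fun[OF assms(1,2)]
  using assms by (intro smooth_sum smooth_mult smooth_D(4)) auto

lemma dep_vf:
  assumes "finite S" "depends_only G S" "\<And>c. c \<in> S \<Longrightarrow> depends_only (V c) T" "S \<subseteq> T"
  shows "depends_only (vf V G) T"
  unfolding vf_eq_fun[OF assms(1,2)] depends_only_def
proof (intro allI impI)
  fix p q :: point assume pq: "\<forall>c\<in>T. p c = q c"
  have "V c p = V c q" "pd c G p = pd c G q" if "c \<in> S" for c
    using assms(3)[OF that] dep_pd[OF assms(2), of c] pq assms(4) unfolding depends_only_def by blast+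
  then show "(\<Sum>c\<in>S. V c p * pd c G p) = (\<Sum>c\<in>S. V c q * pd c G q)" by (intro sum.cong) auto
qed

lemma pd_vf:
  assumes "finite S" "depends_only G S" "smooth G" "\<And>d. d \<in> S \<Longrightarrow> cdiff (W d)"
  shows "pd e (vf W G) p = (\<Sum>d\<in>S. pd e (W d) p * pd d G p + W d p * pd e (pd d G) p)"
proof -
  have "((\<lambda>s. \<Sum>d\<in>S. W d (p(e:=s)) * pd d G (p(e:=s))) has_real_derivative
     (\<Sum>d\<in>S. pd e (W d) p * pd d G p + pd e (pd d G) p * W d p)) (at (p e))"
  proof (rule DERIV_sum)
    fix d assume "d \<in> S"
    then have "cdiff (W d)" "cdiff (pd d G)" using assms(4) smooth_D(3)[OF smooth_D(4)[OF assms(3)]] by auto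
    from DERIV_mult[OF cdiff_at0[OF this(1), of p e] cdiff_at0[OF this(2), of p e]]
    show "((\<lambda>s. W d (p(e:=s)) * pd d G (p(e:=s))) has_real_derivative pd e (W d) p * pd d G p + pd e (pd d G) p * W d p) (at (p e))"
      by simp
  qed
  from pd_eqI[OF this] show ?thesis unfolding vf_eq_fun[OF assms(1,2)] by (simp add: algebra_simps)
qed



fun ordc :: "coord \<Rightarrow> nat" where
  "ordc (Xc _) = 0" | "ordc U = 0" | "ordc (P _ k) = Suc k"

definition Sn :: "nat \<Rightarrow> coord set" where "Sn n = {c. ordc c \<le> n}"

lemma UNIV_ix: "(UNIV::ix set) = {I1,I2,I3}" using ix.exhaust by auto

lemma finite_Sn: "finite (Sn n)"
proof -
  have "Sn n \<subseteq> Xc ` UNIV \<union> {U} \<union> (\<lambda>(i,k). P i k) ` (UNIV \<times> {..<n})"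
  proof
    fix c assume "c \<in> Sn n"
    then show "c \<in> Xc ` UNIV \<union> {U} \<union> (\<lambda>(i,k). P i k) ` (UNIV \<times> {..<n})"
      by (cases c) (auto simp: Sn_def image_iff)
  qed
  moreover have "finite (Xc ` UNIV \<union> {U} \<union> (\<lambda>(i,k). P i k) ` (UNIV \<times> {..<n}))"
    by (simp add: UNIV_ix)
  ultimately show ?thesis by (rule finite_subset)
qed

lemma Sn_mono: "m \<le> n \<Longrightarrow> Sn m \<subseteq> Sn n" by (auto simp: Sn_def)

lemma finite_in_Sn: "finite S \<Longrightarrow> S \<subseteq> Sn (\<Sum>c\<in>S. ordc c)"
  by (auto simp: Sn_def intro: member_le_sum)

lemma vf_vf:
  assumes S: "finite S" and T: "finite T" and G: "smooth G" "depends_only G S"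
    and W: "\<And>d. d \<in> S \<Longrightarrow> smooth (W d) \<and> depends_only (W d) T"
  shows "vf V (vf W G) p = (\<Sum>d\<in>S. vf V (W d) p * pd d G p) +
           (\<Sum>c\<in>S. \<Sum>d\<in>S. V c p * W d p * pd c (pd d G) p)"
proof -
  let ?R = "S \<union> T"
  have R: "finite ?R" using S T by simp
  have depR: "depends_only (vf W G) ?R"
    using dep_vf[OF S G(2), of W ?R] W dep_mono by blast
  have WR: "depends_only (W d) ?R" if "d \<in> S" for d using W[OF that] dep_mono by blast
  have "vf V (vf W G) p = (\<Sum>c\<in>?R. V c p * pd c (vf W G) p)" using vf_sum[OF R depR] .
  also have "\<dots> = (\<Sum>c\<in>?R. V c p * (\<Sum>d\<in>S. pd c (W d) p * pd d G p + W d p * pd c (pd d G) p))"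
    using pd_vf[OF S G(2) G(1)] W smooth_D(3) by simp
  also have "\<dots> = (\<Sum>c\<in>?R. \<Sum>d\<in>S. V c p * pd c (W d) p * pd d G p) +
      (\<Sum>c\<in>?R. \<Sum>d\<in>S. V c p * W d p * pd c (pd d G) p)"
    by (simp add: sum_distrib_left sum.distrib algebra_simps)
  also have "(\<Sum>c\<in>?R. \<Sum>d\<in>S. V c p * pd c (W d) p * pd d G p) = (\<Sum>d\<in>S. vf V (W d) p * pd d G p)"
  proof -
    have "(\<Sum>c\<in>?R. \<Sum>d\<in>S. V c p * pd c (W d) p * pd d G p) = (\<Sum>d\<in>S. \<Sum>c\<in>?R. V c p * pd c (W d) p * pd d G p)"
      by (rule sum.swap)
    also have "\<dots> = (\<Sum>d\<in>S. vf V (W d) p * pd d G p)"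
      by (intro sum.cong refl) (simp add: vf_sum[OF R WR] sum_distrib_right)
    finally show ?thesis .
  qed
  also have "(\<Sum>c\<in>?R. \<Sum>d\<in>S. V c p * W d p * pd c (pd d G) p) = (\<Sum>c\<in>S. \<Sum>d\<in>S. V c p * W d p * pd c (pd d G) p)"
  proof (rule sum.mono_neutral_right[OF R])
    show "S \<subseteq> ?R" by blast
    show "\<forall>c\<in>?R - S. (\<Sum>d\<in>S. V c p * W d p * pd c (pd d G) p) = 0"
      using pd_zero[OF dep_pd[OF G(2)]] by simp
  qed
  finally show ?thesis .
qed

locale TD =
  fixes f :: "ix \<Rightarrow> ix \<Rightarrow> real \<Rightarrow> real \<Rightarrow> real \<Rightarrow> real \<Rightarrow> real \<Rightarrow> real \<Rightarrow> real"
    and X :: "ix \<Rightarrow> coord \<Rightarrow> func"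
  assumes f_smooth: "\<forall>i j. ix_lt i j \<longrightarrow> smooth (fS f i j)"
    and total: "total_derivs f X"
    and compat: "\<forall>i j k. i \<noteq> j \<and> j \<noteq> k \<and> i \<noteq> k \<longrightarrow>
                   (\<forall>p. vf (X k) (fS f i j) p = vf (X i) (fS f k j) p)"
begin

lemma X_Xc: "X i (Xc j) = (\<lambda>p. if j = i then 1 else 0)"
  using total unfolding total_derivs_def by auto
lemma X_U: "X i U = (\<lambda>p. p (P i 0))"
  using total unfolding total_derivs_def by auto
lemma X_Pii: "X i (P i k) = (\<lambda>p. p (P i (Suc k)))"
  using total unfolding total_derivs_def by auto
lemma X_Pij: "j \<noteq> i \<Longrightarrow> X i (P j k) = (vf (X j) ^^ k) (fS f i j)"
  using total unfolding total_derivs_def by auto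

lemma fS_sym: "i \<noteq> j \<Longrightarrow> fS f i j = fS f j i"
  by (cases i; cases j) (auto simp: fS_def ix_lt_def fun_eq_iff)

lemma fS_smooth: "i \<noteq> j \<Longrightarrow> smooth (fS f i j)"
proof -
  assume "i \<noteq> j"
  then have "ix_lt i j \<or> ix_lt j i" by (cases i; cases j) (auto simp: ix_lt_def)
  then show ?thesis using f_smooth fS_sym[OF \<open>i \<noteq> j\<close>] by metis
qed

lemma fS_dep: "depends_only (fS f i j) (Sn 1)"
  unfolding depends_only_def
proof (intro allI impI)
  fix p q :: point assume H: "\<forall>c\<in>Sn 1. p c = q c"
  have "p (Xc k) = q (Xc k)" "p U = q U" "p (P k 0) = q (P k 0)" for k
    using H by (auto simp: Sn_def)
  then show "fS f i j p = fS f i j q" by (simp add: fS_def)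
qed

definition Qp :: "nat \<Rightarrow> bool" where
  "Qp m \<longleftrightarrow> (\<forall>a j. j \<noteq> a \<longrightarrow> smooth ((vf (X j) ^^ m) (fS f a j)) \<and>
      depends_only ((vf (X j) ^^ m) (fS f a j)) (Sn (Suc m)))"

lemma dep_const: "depends_only (\<lambda>p. a) S" by (simp add: depends_only_def)

lemma X_props_aux:
  assumes Q: "\<And>m. m < n \<Longrightarrow> Qp m" and o: "ordc c \<le> n"
  shows "smooth (X a c) \<and> depends_only (X a c) (Sn (Suc n))"
proof (cases c)
  case (Xc j) then show ?thesis by (simp add: X_Xc smooth_const dep_const)
next
  case U
  have "depends_only (\<lambda>p. p (P a 0)) (Sn (Suc n))" by (auto simp: depends_only_def Sn_def)
  then show ?thesis using U by (simp add: X_U smooth_proj)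
next
  case (P l k)
  show ?thesis
  proof (cases "l = a")
    case True
    have "depends_only (\<lambda>p. p (P a (Suc k))) (Sn (Suc n))" using o P by (auto simp: depends_only_def Sn_def)
    then show ?thesis using P True by (simp add: X_Pii smooth_proj)
  next
    case False
    have "k < n" using o P by simp
    from Q[OF this] False have "smooth ((vf (X l) ^^ k) (fS f a l))"
      "depends_only ((vf (X l) ^^ k) (fS f a l)) (Sn (Suc k))" unfolding Qp_def by auto
    moreover have "Sn (Suc k) \<subseteq> Sn (Suc n)" using \<open>k < n\<close> by (intro Sn_mono) simp
    ultimately show ?thesis using P False by (simp add: X_Pij dep_mono)
  qed
qed

lemma Qp_all: "Qp m"
proof (induction m rule: less_induct)
  case (less m)
  show ?case unfolding Qp_def
  proof (intro allI impI)
    fix a j :: ix assume ne: "j \<noteq> a"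
    show "smooth ((vf (X j) ^^ m) (fS f a j)) \<and> depends_only ((vf (X j) ^^ m) (fS f a j)) (Sn (Suc m))"
    proof (cases m)
      case 0 then show ?thesis using fS_smooth fS_dep ne by auto
    next
      case (Suc k)
      let ?G = "(vf (X j) ^^ k) (fS f a j)"
      have G: "smooth ?G" "depends_only ?G (Sn m)" using less[of k] Suc ne unfolding Qp_def by auto
      have Xp: "smooth (X j c) \<and> depends_only (X j c) (Sn (Suc m))" if "c \<in> Sn m" for c
        using X_props_aux[of m c j] less that by (auto simp: Sn_def)
      have "smooth (vf (X j) ?G)" using smooth_vf[OF finite_Sn G(2) G(1)] Xp by blast
      moreover have "depends_only (vf (X j) ?G) (Sn (Suc m))"
        using dep_vf[OF finite_Sn G(2)] Xp Sn_mono[of m "Suc m"] by auto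
      ultimately show ?thesis using Suc by simp
    qed
  qed
qed

lemma X_smooth: "smooth (X a c)"
  using X_props_aux[of "ordc c" c a] Qp_all by blast

lemma X_dep: "depends_only (X a c) (Sn (Suc (ordc c)))"
  using X_props_aux[of "ordc c" c a] Qp_all by blast

lemma D_props:
  assumes "smooth G" "depends_only G (Sn n)"
  shows "smooth (vf (X a) G) \<and> depends_only (vf (X a) G) (Sn (Suc n))"
proof -
  have Xp: "depends_only (X a c) (Sn (Suc n))" if "c \<in> Sn n" for c
    using X_dep[of a c] Sn_mono[of "Suc (ordc c)" "Suc n"] that dep_mono by (auto simp: Sn_def)
  show ?thesis using smooth_vf[OF finite_Sn assms(2,1)] X_smooth dep_vf[OF finite_Sn assms(2)] Xp
      Sn_mono[of n "Suc n"] by auto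
qed

lemma FC:
  assumes G: "smooth G" "depends_only G (Sn n)"
    and H: "\<And>c p. ordc c \<le> n \<Longrightarrow> vf (X a) (X b c) p = vf (X b) (X a c) p"
  shows "vf (X a) (vf (X b) G) p = vf (X b) (vf (X a) G) p"
proof -
  have W: "smooth (X e d) \<and> depends_only (X e d) (Sn (Suc n))" if "d \<in> Sn n" for d e
    using X_smooth X_dep[of e d] Sn_mono[of "Suc (ordc d)" "Suc n"] that dep_mono by (auto simp: Sn_def)
  have e1: "vf (X a) (vf (X b) G) p = (\<Sum>d\<in>Sn n. vf (X a) (X b d) p * pd d G p) +
           (\<Sum>c\<in>Sn n. \<Sum>d\<in>Sn n. X a c p * X b d p * pd c (pd d G) p)"
    by (rule vf_vf[OF finite_Sn finite_Sn G]) (use W in blast)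
  have e2: "vf (X b) (vf (X a) G) p = (\<Sum>d\<in>Sn n. vf (X b) (X a d) p * pd d G p) +
           (\<Sum>c\<in>Sn n. \<Sum>d\<in>Sn n. X b c p * X a d p * pd c (pd d G) p)"
    by (rule vf_vf[OF finite_Sn finite_Sn G]) (use W in blast)
  have s1: "(\<Sum>d\<in>Sn n. vf (X a) (X b d) p * pd d G p) = (\<Sum>d\<in>Sn n. vf (X b) (X a d) p * pd d G p)"
    using H by (intro sum.cong refl) (simp add: Sn_def)
  have "(\<Sum>c\<in>Sn n. \<Sum>d\<in>Sn n. X a c p * X b d p * pd c (pd d G) p) =
        (\<Sum>d\<in>Sn n. \<Sum>c\<in>Sn n. X a c p * X b d p * pd c (pd d G) p)" by (rule sum.swap)
  also have "\<dots> = (\<Sum>c\<in>Sn n. \<Sum>d\<in>Sn n. X b c p * X a d p * pd c (pd d G) p)"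
    using schwarz[OF G(1)] by (simp add: mult.commute)
  finally show ?thesis using e1 e2 s1 by simp
qed

end



context TD begin

lemma diag:
  assumes "a \<noteq> b"
  shows "vf (X a) (X b (P a n)) p = vf (X b) (X a (P a n)) p"
proof -
  have "vf (X a) (X b (P a n)) p = (vf (X a) ^^ Suc n) (fS f b a) p"
    using assms by (simp add: X_Pij)
  also have "\<dots> = X b (P a (Suc n)) p" using assms by (simp add: X_Pij del: funpow.simps)
  also have "\<dots> = vf (X b) (X a (P a n)) p" by (simp add: X_Pii vf_proj)
  finally show ?thesis .
qed

lemma inner:
  assumes IH: "\<forall>a b c p. ordc c \<le> n \<longrightarrow> vf (X a) (X b c) p = vf (X b) (X a c) p"
    and d: "a \<noteq> b" "a \<noteq> l" "b \<noteq> l"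
  shows "m \<le> n \<Longrightarrow> \<forall>p. vf (X a) ((vf (X l) ^^ m) (fS f b l)) p = vf (X b) ((vf (X l) ^^ m) (fS f a l)) p"
proof (induction m)
  case 0
  then show ?case using compat d by simp
next
  case (Suc m)
  let ?Hb = "(vf (X l) ^^ m) (fS f b l)" and ?Ha = "(vf (X l) ^^ m) (fS f a l)"
  have Hb: "smooth ?Hb" "depends_only ?Hb (Sn (Suc m))" using Qp_all[of m] d unfolding Qp_def by auto
  have Ha: "smooth ?Ha" "depends_only ?Ha (Sn (Suc m))" using Qp_all[of m] d unfolding Qp_def by auto
  have eq: "vf (X a) ?Hb = vf (X b) ?Ha" using Suc by auto
  show ?case
  proof
    fix p
    have "vf (X a) (vf (X l) ?Hb) p = vf (X l) (vf (X a) ?Hb) p"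
      by (rule FC[OF Hb]) (use IH Suc.prems in auto)
    also have "\<dots> = vf (X l) (vf (X b) ?Ha) p" by (simp add: eq)
    also have "\<dots> = vf (X b) (vf (X l) ?Ha) p"
      by (rule FC[OF Ha]) (use IH Suc.prems in auto)
    finally show "vf (X a) ((vf (X l) ^^ Suc m) (fS f b l)) p = vf (X b) ((vf (X l) ^^ Suc m) (fS f a l)) p"
      by simp
  qed
qed

lemma Comm: "\<forall>a b c p. ordc c \<le> n \<longrightarrow> vf (X a) (X b c) p = vf (X b) (X a c) p"
proof (induction n)
  case 0
  show ?case
  proof (intro allI impI)
    fix a b c p assume o: "ordc c \<le> 0"
    show "vf (X a) (X b c) p = vf (X b) (X a c) p"
    proof (cases c)
      case (Xc j) then show ?thesis by (simp add: X_Xc vf_const)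
    next
      case U
      show ?thesis
      proof (cases "a = b")
        case False
        then show ?thesis using U by (simp add: X_U vf_proj X_Pij fS_sym)
      qed simp
    next
      case (P l k) then show ?thesis using o by simp
    qed
  qed
next
  case (Suc n)
  show ?case
  proof (intro allI impI)
    fix a b c p assume o: "ordc c \<le> Suc n"
    show "vf (X a) (X b c) p = vf (X b) (X a c) p"
    proof (cases "ordc c \<le> n")
      case True then show ?thesis using Suc.IH by blast
    next
      case False
      then obtain l where c: "c = P l n" using o by (cases c) auto
      show ?thesis
      proof (cases "a = b")
        case ab: False
        show ?thesis
        proof (cases "l = a")
          case True then show ?thesis using diag[OF ab] c by simp
        next
          case la: False
          show ?thesis
          proof (cases "l = b")
            case True then show ?thesis using diag[of b a n p] ab c by simp
          next
            case lb: False
            have "\<forall>p. vf (X a) ((vf (X l) ^^ n) (fS f b l)) p = vf (X b) ((vf (X l) ^^ n) (fS f a l)) p"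
              using inner[OF Suc.IH, of a b l n] ab la lb by auto
            then show ?thesis using c la lb by (simp add: X_Pij)
          qed
        qed
      qed simp
    qed
  qed
qed

end



theorem lemma4p11:
  fixes f :: "ix \<Rightarrow> ix \<Rightarrow> real \<Rightarrow> real \<Rightarrow> real \<Rightarrow> real \<Rightarrow> real \<Rightarrow> real \<Rightarrow> real"
    and X :: "ix \<Rightarrow> coord \<Rightarrow> func"
    and I J I' :: func
  assumes f_smooth: "\<forall>i j. ix_lt i j \<longrightarrow> smooth (fS f i j)"
    and total: "total_derivs f X"
    and compat: "\<forall>i j k. i \<noteq> j \<and> j \<noteq> k \<and> i \<noteq> k \<longrightarrow>
                   (\<forall>p. vf (X k) (fS f i j) p = vf (X i) (fS f k j) p)"
    and I_smooth: "smooth I" and J_smooth: "smooth J"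
    and I_inv1: "invariant_fun X I1 I" and I_inv2: "invariant_fun X I2 I"
    and J_inv1: "invariant_fun X I1 J" and J_inv2: "invariant_fun X I2 J"
    and I3: "\<forall>p. vf (X I3) I p = I' p"
    and J3: "\<forall>p. vf (X I3) J p = 1"
  shows "contact01 (form_diff (dV I) (form_smult I' (dV J))) \<and>
         invariant_form X I1 (form_diff (dV I) (form_smult I' (dV J))) \<and>
         invariant_form X I2 (form_diff (dV I) (form_smult I' (dV J)))"
proof -
  interpret TD f X using f_smooth total compat by unfold_locales
  obtain S1 where S1: "finite S1" "depends_only I S1"
    using smooth_D(1)[OF I_smooth] depends_only_finite by blast
  obtain S2 where S2: "finite S2" "depends_only J S2"
    using smooth_D(1)[OF J_smooth] depends_only_finite by blast
  define n where "n = (\<Sum>c\<in>S1 \<union> S2. ordc c)"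
  define S where "S = Sn n"
  have SS: "S1 \<union> S2 \<subseteq> S" unfolding S_def n_def using finite_in_Sn S1 S2 by blast
  have Sfin: "finite S" unfolding S_def by (rule finite_Sn)
  have IS: "depends_only I S" and JS: "depends_only J S" using S1 S2 SS dep_mono by blast+
  define \<omega> where "\<omega> = form_diff (dV I) (form_smult I' (dV J))"
  have I'eq: "I' = vf (X I3) I" using I3 by auto
  have I'sm: "smooth I'" using D_props[OF I_smooth IS[unfolded S_def]] I'eq by simp
  have om_v: "\<omega> c = (\<lambda>p. pd c I p - I' p * pd c J p)" if "vertical c" for c
    using that by (simp add: \<omega>_def form_diff_def form_smult_def dV_def fun_eq_iff)
  have om_nv: "\<omega> c = (\<lambda>p. 0)" if "\<not> vertical c" for c
    using that by (simp add: \<omega>_def form_diff_def form_smult_def dV_def fun_eq_iff)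
  have om_S: "\<omega> c = (\<lambda>p. 0)" if "c \<notin> S" for c
  proof (cases "vertical c")
    case True then show ?thesis using om_v pd_zero[OF IS that] pd_zero[OF JS that] by simp
  qed (use om_nv in auto)
  have Wsub: "{c. \<omega> c \<noteq> (\<lambda>p. 0)} \<subseteq> S" using om_S by blast
  have contact: "contact01 \<omega>"
    unfolding contact01_def
  proof (intro conjI allI)
    fix j show "\<omega> (Xc j) = (\<lambda>p. 0)" using om_nv by simp
  next
    show "finite {c. \<omega> c \<noteq> (\<lambda>p. 0)}" using Wsub Sfin finite_subset by blast
  next
    fix c show "smooth (\<omega> c)"
    proof (cases "vertical c")
      case True then show ?thesis
        using om_v smooth_diff[OF smooth_D(4)[OF I_smooth] smooth_mult[OF I'sm smooth_D(4)[OF J_smooth]]]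
        by simp
    qed (use om_nv smooth_const in auto)
  qed
  have Ekey: "vf (X j) (pd c' K) p + (\<Sum>c\<in>S. pd c K p * pd c' (X j c) p) = 0"
    if K: "smooth K" "depends_only K S" "vf (X j) K = (\<lambda>p. 0)" for K j c' p
  proof -
    have "0 = pd c' (vf (X j) K) p" using K(3) by (simp add: pd_def)
    also have "\<dots> = (\<Sum>d\<in>S. pd c' (X j d) p * pd d K p + X j d p * pd c' (pd d K) p)"
      using pd_vf[OF Sfin K(2) K(1)] X_smooth smooth_D(3) by blast
    also have "\<dots> = (\<Sum>d\<in>S. pd d K p * pd c' (X j d) p) + (\<Sum>d\<in>S. X j d p * pd d (pd c' K) p)"
      by (simp add: sum.distrib schwarz[OF K(1)] mult.commute)
    also have "(\<Sum>d\<in>S. X j d p * pd d (pd c' K) p) = vf (X j) (pd c' K) p"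
      using vf_sum[OF Sfin dep_pd[OF K(2)]] by simp
    finally show ?thesis by simp
  qed
  have inv: "invariant_form X j \<omega>"
    if jI: "\<forall>p. vf (X j) I p = 0" and jJ: "\<forall>p. vf (X j) J p = 0" and j3: "j \<noteq> I3" for j
    unfolding invariant_form_def interior11_def
  proof (intro allI)
    fix c' p
    show "dH01 X \<omega> j c' p = 0"
    proof (cases "vertical c'")
      case False
      then show ?thesis using om_nv[OF False] by (simp add: dH01_def dV_def vf_zero)
    next
      case True
      have DjI: "vf (X j) I = (\<lambda>p. 0)" and DjJ: "vf (X j) J = (\<lambda>p. 0)" using jI jJ by auto
      have sumS: "(\<Sum>c | \<omega> c \<noteq> (\<lambda>q. 0). \<omega> c p * dV (X j c) c' p) =
          (\<Sum>c\<in>S. (pd c I p - I' p * pd c J p) * pd c' (X j c) p)"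
      proof -
        have "(\<Sum>c | \<omega> c \<noteq> (\<lambda>q. 0). \<omega> c p * dV (X j c) c' p) = (\<Sum>c\<in>S. \<omega> c p * dV (X j c) c' p)"
          by (rule sum.mono_neutral_left[OF Sfin Wsub]) auto
        also have "\<dots> = (\<Sum>c\<in>S. (pd c I p - I' p * pd c J p) * pd c' (X j c) p)"
        proof (rule sum.cong[OF refl])
          fix c assume "c \<in> S"
          show "\<omega> c p * dV (X j c) c' p = (pd c I p - I' p * pd c J p) * pd c' (X j c) p"
          proof (cases "vertical c")
            case True then show ?thesis using om_v \<open>vertical c'\<close> by (simp add: dV_def)
          next
            case False
            then obtain i where "c = Xc i" by (cases c) auto
            then show ?thesis using om_nv[OF False] by (simp add: X_Xc pd_def)
          qed
        qed
        finally show ?thesis .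
      qed
      have DjI': "vf (X j) I' p = 0"
      proof -
        have "vf (X j) I' p = vf (X j) (vf (X I3) I) p" by (simp add: I'eq)
        also have "\<dots> = vf (X I3) (vf (X j) I) p"
          by (rule FC[OF I_smooth IS[unfolded S_def]]) (use Comm in blast)
        also have "\<dots> = 0" by (simp add: DjI vf_zero)
        finally show ?thesis .
      qed
      have vom: "vf (X j) (\<omega> c') p = vf (X j) (pd c' I) p - (vf (X j) I' p * pd c' J p + I' p * vf (X j) (pd c' J) p)"
        unfolding om_v[OF True]
        using vf_diff[OF smooth_D(4)[OF I_smooth] smooth_mult[OF I'sm smooth_D(4)[OF J_smooth]]]
          vf_mult[OF I'sm smooth_D(4)[OF J_smooth]] by simp
      have EI: "vf (X j) (pd c' I) p + (\<Sum>c\<in>S. pd c I p * pd c' (X j c) p) = 0"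
        using Ekey[OF I_smooth IS DjI] .
      have EJ: "vf (X j) (pd c' J) p + (\<Sum>c\<in>S. pd c J p * pd c' (X j c) p) = 0"
        using Ekey[OF J_smooth JS DjJ] .
      have ss: "(\<Sum>c\<in>S. (pd c I p - I' p * pd c J p) * pd c' (X j c) p) =
          (\<Sum>c\<in>S. pd c I p * pd c' (X j c) p) - I' p * (\<Sum>c\<in>S. pd c J p * pd c' (X j c) p)"
        by (simp add: sum_subtractf sum_distrib_left left_diff_distrib mult.assoc)
      have "dH01 X \<omega> j c' p = vf (X j) (\<omega> c') p + (\<Sum>c | \<omega> c \<noteq> (\<lambda>q. 0). \<omega> c p * dV (X j c) c' p)"
        by (simp add: dH01_def)
      also have "\<dots> = (vf (X j) (pd c' I) p + (\<Sum>c\<in>S. pd c I p * pd c' (X j c) p))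
          - I' p * (vf (X j) (pd c' J) p + (\<Sum>c\<in>S. pd c J p * pd c' (X j c) p))"
        unfolding vom sumS ss DjI' by (simp add: algebra_simps)
      also have "\<dots> = 0" using EI EJ by simp
      finally show ?thesis .
    qed
  qed
  have "invariant_form X I1 \<omega>" using inv I_inv1 J_inv1 unfolding invariant_fun_def by simp
  moreover have "invariant_form X I2 \<omega>" using inv I_inv2 J_inv2 unfolding invariant_fun_def by simp
  ultimately show ?thesis using contact unfolding \<omega>_def by simp
qed


end
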